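(* For all $x,y\in\mathfrak M_{0,\mathrm{sa}}$, $\lim_{n\to\infty}\|L(F_n(x),F_n(y))\|=0$, where for $a,b\in\mathfrak M$, $L(a,b):=e^{ia}e^{ib}-e^{i(a+b)}e^{-\frac12[a,b]}$.
   Context: $\mathcal I$ is the set of finite intervals of $\mathbb Z$. $(\mathfrak M,(M_I)_{I\in\mathcal I})$ is a quasi-local algebra: unital $C^*$-algebra $\mathfrak M$, $W^*$-subalgebras $M_I$ with $M_I\subseteq M_J$ for $I\subseteq J$, $\mathfrak M_0:=\bigcup_IM_I$ dense, common unit, $M_I$ and $M_J$ commuting when $I\cap J=\varnothing$; $\mathfrak M_{0,\mathrm{sa}}$ denotes the self-adjoint elements of $\mathfrak M_0$. $\gamma:\mathbb Z\curvearrowright\mathfrak M$ is an action by $*$-automorphisms with $\gamma_j(M_I)=M_{I+j}$. $\chi$ is a $\gamma$-invariant multiplicative state ($\chi(xy)=\chi(x)\chi(y)$ for $x\in M_I,y\in M_J$, $I\cap J=\varnothing$). $(I_n)$ is an increasing sequence in $\mathcal I$ with union $\mathbb Z$, and $F_n(x)=|I_n|^{-1/2}\sum_{j\in I_n}(\gamma_j(x)-\chi(x)1)$. *)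

theory Defs
  imports "HOL-Analysis.Analysis"
begin

text \<open>The complex scalar multiplication sm and the involution st are explicit parameters.\<close>

definition cstar_algebra :: "(complex \<Rightarrow> 'a::{banach,real_normed_algebra_1} \<Rightarrow> 'a) \<Rightarrow> ('a \<Rightarrow> 'a) \<Rightarrow> bool"
  where "cstar_algebra sm st \<longleftrightarrow>
    (\<forall>(r::real) x. sm (complex_of_real r) x = r *\<^sub>R x) \<and>
    (\<forall>c d x. sm (c * d) x = sm c (sm d x)) \<and>
    (\<forall>c d x. sm (c + d) x = sm c x + sm d x) \<and>
    (\<forall>c x y. sm c (x + y) = sm c x + sm c y) \<and>
    (\<forall>c x y. sm c (x * y) = sm c x * y \<and> sm c (x * y) = x * sm c y) \<and>
    (\<forall>c x. norm (sm c x) = cmod c * norm x) \<and>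
    (\<forall>x. st (st x) = x) \<and>
    (\<forall>x y. st (x + y) = st x + st y) \<and>
    (\<forall>c x. st (sm c x) = sm (cnj c) (st x)) \<and>
    (\<forall>x y. st (x * y) = st y * st x) \<and>
    (\<forall>x. norm (st x * x) = (norm x)\<^sup>2)"

definition cstar_subalgebra :: "(complex \<Rightarrow> 'a \<Rightarrow> 'a) \<Rightarrow> ('a \<Rightarrow> 'a) \<Rightarrow> 'a::{banach,real_normed_algebra_1} set \<Rightarrow> bool"
  where "cstar_subalgebra sm st M \<longleftrightarrow>
    1 \<in> M \<and> 0 \<in> M \<and>
    (\<forall>x\<in>M. \<forall>y\<in>M. x + y \<in> M \<and> x * y \<in> M) \<and>
    (\<forall>c. \<forall>x\<in>M. sm c x \<in> M) \<and>
    (\<forall>x\<in>M. st x \<in> M) \<and>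
    closed M"

definition bdd_clinear_on :: "(complex \<Rightarrow> 'a \<Rightarrow> 'a) \<Rightarrow> 'a::real_normed_vector set \<Rightarrow> ('a \<Rightarrow> complex) \<Rightarrow> bool"
  where "bdd_clinear_on sm M f \<longleftrightarrow>
    (\<forall>x\<in>M. \<forall>y\<in>M. f (x + y) = f x + f y) \<and>
    (\<forall>c. \<forall>x\<in>M. f (sm c x) = c * f x) \<and>
    (\<exists>K. \<forall>x\<in>M. cmod (f x) \<le> K * norm x) \<and>
    (\<forall>x. x \<notin> M \<longrightarrow> f x = 0)"

definition fnorm :: "'a::real_normed_vector set \<Rightarrow> ('a \<Rightarrow> complex) \<Rightarrow> real"
  where "fnorm M f = Sup {cmod (f x) | x. x \<in> M \<and> norm x \<le> 1}"

definition dual_banach_space :: "(complex \<Rightarrow> 'a \<Rightarrow> 'a) \<Rightarrow> 'a::real_normed_vector set \<Rightarrow> bool"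
  where "dual_banach_space sm M \<longleftrightarrow>
    (\<exists>V. V \<subseteq> Collect (bdd_clinear_on sm M) \<and>
         (\<lambda>_. 0) \<in> V \<and>
         (\<forall>f\<in>V. \<forall>g\<in>V. (\<lambda>x. f x + g x) \<in> V) \<and>
         (\<forall>c. \<forall>f\<in>V. (\<lambda>x. c * f x) \<in> V) \<and>
         \<comment> \<open>the canonical map M \<rightarrow> V* is isometric ...\<close>
         (\<forall>x\<in>M. norm x = Sup {cmod (f x) | f. f \<in> V \<and> fnorm M f \<le> 1}) \<and>
         \<comment> \<open>... and onto the bounded linear functionals on V\<close>
         (\<forall>\<phi> :: ('a \<Rightarrow> complex) \<Rightarrow> complex.
            (\<forall>f\<in>V. \<forall>g\<in>V. \<phi> (\<lambda>x. f x + g x) = \<phi> f + \<phi> g) \<and>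
            (\<forall>c. \<forall>f\<in>V. \<phi> (\<lambda>x. c * f x) = c * \<phi> f) \<and>
            (\<exists>K. \<forall>f\<in>V. cmod (\<phi> f) \<le> K * fnorm M f)
            \<longrightarrow> (\<exists>x\<in>M. \<forall>f\<in>V. \<phi> f = f x)))"

text \<open>W*-subalgebra: a unital C*-subalgebra which is a W*-algebra, i.e. (Sakai)
a dual Banach space.\<close>
definition wstar_subalgebra :: "(complex \<Rightarrow> 'a \<Rightarrow> 'a) \<Rightarrow> ('a \<Rightarrow> 'a) \<Rightarrow> 'a::{banach,real_normed_algebra_1} set \<Rightarrow> bool"
  where "wstar_subalgebra sm st M \<longleftrightarrow> cstar_subalgebra sm st M \<and> dual_banach_space sm M"

definition fin_intervals :: "int set set"
  where "fin_intervals = {{a..b} | a b. a \<le> b}"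

definition quasi_local :: "(complex \<Rightarrow> 'a \<Rightarrow> 'a) \<Rightarrow> ('a \<Rightarrow> 'a) \<Rightarrow> (int set \<Rightarrow> 'a::{banach,real_normed_algebra_1} set) \<Rightarrow> bool"
  where "quasi_local sm st M \<longleftrightarrow>
    cstar_algebra sm st \<and>
    (\<forall>I\<in>fin_intervals. wstar_subalgebra sm st (M I)) \<and>
    (\<forall>I\<in>fin_intervals. \<forall>J\<in>fin_intervals. I \<subseteq> J \<longrightarrow> M I \<subseteq> M J) \<and>
    closure (\<Union>I\<in>fin_intervals. M I) = UNIV \<and>
    (\<forall>I\<in>fin_intervals. \<forall>J\<in>fin_intervals. I \<inter> J = {} \<longrightarrow>
        (\<forall>x\<in>M I. \<forall>y\<in>M J. x * y = y * x))"

definition star_automorphism :: "(complex \<Rightarrow> 'a \<Rightarrow> 'a) \<Rightarrow> ('a \<Rightarrow> 'a) \<Rightarrow> ('a::{banach,real_normed_algebra_1} \<Rightarrow> 'a) \<Rightarrow> bool"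
  where "star_automorphism sm st g \<longleftrightarrow>
    bij g \<and>
    (\<forall>x y. g (x + y) = g x + g y) \<and>
    (\<forall>x y. g (x * y) = g x * g y) \<and>
    (\<forall>c x. g (sm c x) = sm c (g x)) \<and>
    (\<forall>x. g (st x) = st (g x)) \<and>
    g 1 = 1"

definition shift_action :: "(complex \<Rightarrow> 'a \<Rightarrow> 'a) \<Rightarrow> ('a \<Rightarrow> 'a) \<Rightarrow> (int set \<Rightarrow> 'a::{banach,real_normed_algebra_1} set) \<Rightarrow> (int \<Rightarrow> 'a \<Rightarrow> 'a) \<Rightarrow> bool"
  where "shift_action sm st M \<gamma> \<longleftrightarrow>
    (\<forall>j. star_automorphism sm st (\<gamma> j)) \<and>
    \<gamma> 0 = id \<and>
    (\<forall>i j. \<gamma> (i + j) = \<gamma> i \<circ> \<gamma> j) \<and>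
    (\<forall>j. \<forall>I\<in>fin_intervals. \<gamma> j ` M I = M ((\<lambda>k. k + j) ` I))"

definition is_state :: "(complex \<Rightarrow> 'a \<Rightarrow> 'a) \<Rightarrow> ('a \<Rightarrow> 'a) \<Rightarrow> ('a::{banach,real_normed_algebra_1} \<Rightarrow> complex) \<Rightarrow> bool"
  where "is_state sm st \<omega> \<longleftrightarrow>
    (\<forall>x y. \<omega> (x + y) = \<omega> x + \<omega> y) \<and>
    (\<forall>c x. \<omega> (sm c x) = c * \<omega> x) \<and>
    (\<forall>x. \<exists>r\<ge>0. \<omega> (st x * x) = complex_of_real r) \<and>
    \<omega> 1 = 1"

definition invariant_multiplicative_state ::
  "(complex \<Rightarrow> 'a \<Rightarrow> 'a) \<Rightarrow> ('a \<Rightarrow> 'a) \<Rightarrow> (int set \<Rightarrow> 'a::{banach,real_normed_algebra_1} set) \<Rightarrow> (int \<Rightarrow> 'a \<Rightarrow> 'a) \<Rightarrow> ('a \<Rightarrow> complex) \<Rightarrow> bool"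
  where "invariant_multiplicative_state sm st M \<gamma> \<omega> \<longleftrightarrow>
    is_state sm st \<omega> \<and>
    (\<forall>j x. \<omega> (\<gamma> j x) = \<omega> x) \<and>
    (\<forall>I\<in>fin_intervals. \<forall>J\<in>fin_intervals. I \<inter> J = {} \<longrightarrow>
        (\<forall>x\<in>M I. \<forall>y\<in>M J. \<omega> (x * y) = \<omega> x * \<omega> y))"

definition local_sa :: "('a \<Rightarrow> 'a) \<Rightarrow> (int set \<Rightarrow> 'a set) \<Rightarrow> 'a set"
  where "local_sa st M = {x. x \<in> (\<Union>I\<in>fin_intervals. M I) \<and> st x = x}"

definition fluct :: "(complex \<Rightarrow> 'a \<Rightarrow> 'a) \<Rightarrow> (int \<Rightarrow> 'a \<Rightarrow> 'a) \<Rightarrow> ('a \<Rightarrow> complex) \<Rightarrow> int set \<Rightarrow> 'a \<Rightarrow> 'a::{banach,real_normed_algebra_1}"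
  where "fluct sm \<gamma> \<omega> I x = (1 / sqrt (real (card I))) *\<^sub>R (\<Sum>j\<in>I. \<gamma> j x - sm (\<omega> x) 1)"

definition Lfun :: "(complex \<Rightarrow> 'a \<Rightarrow> 'a) \<Rightarrow> 'a \<Rightarrow> 'a \<Rightarrow> 'a::{banach,real_normed_algebra_1}"
  where "Lfun sm a b = exp (sm \<i> a) * exp (sm \<i> b)
            - exp (sm \<i> (a + b)) * exp (- ((1/2) *\<^sub>R (a * b - b * a)))"

end

theory Submission
  imports Defs "HOL-Computational_Algebra.Formal_Power_Series"
begin


lemma mvt01:
  fixes g :: "real \<Rightarrow> 'a::real_normed_vector"
  assumes "\<And>s. s \<in> {0..1} \<Longrightarrow> (g has_vector_derivative g' s) (at s within {0..1})"
    and "\<And>s. s \<in> {0..1} \<Longrightarrow> norm (g' s) \<le> B"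
  shows "norm (g 1 - g 0) \<le> B"
proof -
  have "norm (g 1 - g 0) \<le> B * norm (1 - 0::real)"
  proof (rule differentiable_bound[where f'="\<lambda>s h. h *\<^sub>R g' s"])
    show "convex {0..1::real}" by simp
    fix x :: real assume x: "x \<in> {0..1}"
    show "(g has_derivative (\<lambda>h. h *\<^sub>R g' x)) (at x within {0..1})"
      using assms(1)[OF x] by (simp add: has_vector_derivative_def)
    have "onorm (\<lambda>h::real. h *\<^sub>R g' x) \<le> onorm (\<lambda>h::real. h) * norm (g' x)"
      by (rule onorm_scaleR_left_lemma) (rule bounded_linear_ident)
    also have "\<dots> \<le> 1 * norm (g' x)"
      by (intro mult_right_mono onorm_id_le) auto
    finally show "onorm (\<lambda>h::real. h *\<^sub>R g' x) \<le> B" using assms(2)[OF x] by simp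
  qed auto
  then show ?thesis by simp
qed

lemma exp_phi_deriv:
  fixes X :: "'a::{banach,real_normed_algebra_1}"
  assumes "(\<phi> has_real_derivative d) (at s within T)"
  shows "((\<lambda>s. exp (\<phi> s *\<^sub>R X)) has_vector_derivative (d *\<^sub>R (exp (\<phi> s *\<^sub>R X) * X))) (at s within T)"
proof -
  have "(\<phi> has_vector_derivative d) (at s within T)"
    using assms by (simp add: has_real_derivative_iff_has_vector_derivative)
  from vector_diff_chain_within[OF this exp_scaleR_has_vector_derivative_right]
  show ?thesis by (simp add: o_def)
qed

lemma exp_scaleR_commute:
  fixes X :: "'a::{banach,real_normed_algebra_1}"
  shows "exp (r *\<^sub>R X) * X = X * exp (r *\<^sub>R X)"
proof (cases "r = 0")
  case True then show ?thesis by simp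
next
  case False
  have "exp (r *\<^sub>R X) * (r *\<^sub>R X) = (r *\<^sub>R X) * exp (r *\<^sub>R X)"
    by (rule exp_times_arg_commute)
  then have "r *\<^sub>R (exp (r *\<^sub>R X) * X) = r *\<^sub>R (X * exp (r *\<^sub>R X))"
    by simp
  then show ?thesis using False by simp
qed

definition Ubd :: "'a::{banach,real_normed_algebra_1} \<Rightarrow> bool" where
  "Ubd X \<longleftrightarrow> (\<forall>r. norm (exp (r *\<^sub>R X)) \<le> 1)"

lemma Ubd_scale: "Ubd X \<Longrightarrow> Ubd (t *\<^sub>R X)"
  by (simp add: Ubd_def)

lemma norm3:
  fixes a b c :: "'a::real_normed_algebra"
  shows "norm (a * b * c) \<le> norm a * norm b * norm c"
proof -
  have "norm (a * b * c) \<le> norm (a * b) * norm c" by (rule norm_mult_ineq)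
  also have "\<dots> \<le> norm a * norm b * norm c"
    by (intro mult_right_mono norm_mult_ineq norm_ge_zero)
  finally show ?thesis .
qed

lemma alg1:
  fixes E X F Z :: "'a::real_algebra_1"
  assumes "E * X = X * E"
  shows "F * Z * ((-1) *\<^sub>R (E * X)) + (F * X) * Z * E = F * (X * Z - Z * X) * E"
proof -
  have "F * Z * ((-1) *\<^sub>R (E * X)) = - (F * Z * (E * X))"
    by simp
  also have "\<dots> = - (F * Z * X * E)" by (simp only: assms mult.assoc)
  finally show ?thesis by (simp add: algebra_simps)
qed

lemma C1:
  fixes X Z :: "'a::{banach,real_normed_algebra_1}"
  assumes U: "Ubd X"
  shows "norm (Z * exp X - exp X * Z) \<le> norm (X * Z - Z * X)"
proof -
  define g where "g s = exp (s *\<^sub>R X) * Z * exp ((1 - s) *\<^sub>R X)" for s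
  define g' where "g' s = exp (s *\<^sub>R X) * (X * Z - Z * X) * exp ((1 - s) *\<^sub>R X)" for s
  have "norm (g 1 - g 0) \<le> norm (X * Z - Z * X)"
  proof (rule mvt01)
    fix s :: real assume "s \<in> {0..1}"
    have d1: "((\<lambda>s. exp (s *\<^sub>R X)) has_vector_derivative (1 *\<^sub>R (exp (s *\<^sub>R X) * X))) (at s within {0..1})"
      by (rule exp_phi_deriv) (auto intro!: derivative_eq_intros)
    have d2: "((\<lambda>s. exp ((1 - s) *\<^sub>R X)) has_vector_derivative ((-1) *\<^sub>R (exp ((1 - s) *\<^sub>R X) * X))) (at s within {0..1})"
      by (rule exp_phi_deriv) (auto intro!: derivative_eq_intros)
    have D: "(g has_vector_derivative
       (exp (s *\<^sub>R X) * Z * ((-1) *\<^sub>R (exp ((1 - s) *\<^sub>R X) * X)) + (exp (s *\<^sub>R X) * X) * Z * exp ((1 - s) *\<^sub>R X))) (at s within {0..1})"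
      unfolding g_def
      using has_vector_derivative_mult[OF has_vector_derivative_mult_left[OF d1, of Z] d2] by simp
    have Eq: "exp (s *\<^sub>R X) * Z * ((-1) *\<^sub>R (exp ((1 - s) *\<^sub>R X) * X)) + (exp (s *\<^sub>R X) * X) * Z * exp ((1 - s) *\<^sub>R X) = g' s"
      unfolding g'_def using alg1[OF exp_scaleR_commute[of "1 - s" X], of "exp (s *\<^sub>R X)" Z] .
    show "(g has_vector_derivative g' s) (at s within {0..1})" using D unfolding Eq .
    have "norm (g' s) \<le> norm (exp (s *\<^sub>R X)) * norm (X * Z - Z * X) * norm (exp ((1 - s) *\<^sub>R X))"
      unfolding g'_def by (rule norm3)
    also have "\<dots> \<le> 1 * norm (X * Z - Z * X) * 1"
      using U unfolding Ubd_def by (intro mult_mono) auto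
    finally show "norm (g' s) \<le> norm (X * Z - Z * X)" by simp
  qed
  then show ?thesis by (simp add: g_def norm_minus_commute)
qed


lemma alg2:
  fixes E X F Y :: "'a::real_algebra_1"
  assumes "E * X = X * E"
  shows "F * (Y + s *\<^sub>R (Y * X - X * Y)) * ((-1) *\<^sub>R (E * X))
     + (F * (Y * X - X * Y) + (1 *\<^sub>R (F * X)) * (Y + s *\<^sub>R (Y * X - X * Y))) * E
   = F * (s *\<^sub>R (X * (Y * X - X * Y) - (Y * X - X * Y) * X)) * E"
proof -
  have "F * (Y + s *\<^sub>R (Y * X - X * Y)) * ((-1) *\<^sub>R (E * X))
      = - (F * (Y + s *\<^sub>R (Y * X - X * Y)) * (E * X))" by simp
  also have "\<dots> = - (F * (Y + s *\<^sub>R (Y * X - X * Y)) * X * E)"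
    by (simp only: assms mult.assoc)
  finally show ?thesis by (simp add: algebra_simps)
qed

lemma C2:
  fixes X Y :: "'a::{banach,real_normed_algebra_1}"
  assumes U: "Ubd X"
  shows "norm (Y * exp X - exp X * (Y + (Y * X - X * Y)))
     \<le> norm (X * (Y * X - X * Y) - (Y * X - X * Y) * X)"
proof -
  define D where "D = Y * X - X * Y"
  define g where "g s = exp (s *\<^sub>R X) * (Y + s *\<^sub>R D) * exp ((1 - s) *\<^sub>R X)" for s
  define g' where "g' s = exp (s *\<^sub>R X) * (s *\<^sub>R (X * D - D * X)) * exp ((1 - s) *\<^sub>R X)" for s
  have "norm (g 1 - g 0) \<le> norm (X * D - D * X)"
  proof (rule mvt01)
    fix s :: real assume s: "s \<in> {0..1}"
    have d1: "((\<lambda>s. exp (s *\<^sub>R X)) has_vector_derivative (1 *\<^sub>R (exp (s *\<^sub>R X) * X))) (at s within {0..1})"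
      by (rule exp_phi_deriv) (auto intro!: derivative_eq_intros)
    have d2: "((\<lambda>s. exp ((1 - s) *\<^sub>R X)) has_vector_derivative ((-1) *\<^sub>R (exp ((1 - s) *\<^sub>R X) * X))) (at s within {0..1})"
      by (rule exp_phi_deriv) (auto intro!: derivative_eq_intros)
    have d3: "((\<lambda>s. Y + s *\<^sub>R D) has_vector_derivative D) (at s within {0..1})"
      by (auto intro!: derivative_eq_intros)
    have D: "(g has_vector_derivative
       (exp (s *\<^sub>R X) * (Y + s *\<^sub>R D) * ((-1) *\<^sub>R (exp ((1 - s) *\<^sub>R X) * X))
     + (exp (s *\<^sub>R X) * D + (1 *\<^sub>R (exp (s *\<^sub>R X) * X)) * (Y + s *\<^sub>R D)) * exp ((1 - s) *\<^sub>R X))) (at s within {0..1})"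
      unfolding g_def
      by (rule has_vector_derivative_mult[OF has_vector_derivative_mult[OF d1 d3] d2])
    have Eq: "exp (s *\<^sub>R X) * (Y + s *\<^sub>R D) * ((-1) *\<^sub>R (exp ((1 - s) *\<^sub>R X) * X))
     + (exp (s *\<^sub>R X) * D + (1 *\<^sub>R (exp (s *\<^sub>R X) * X)) * (Y + s *\<^sub>R D)) * exp ((1 - s) *\<^sub>R X) = g' s"
      unfolding g'_def D_def using alg2[OF exp_scaleR_commute[of "1 - s" X], of "exp (s *\<^sub>R X)" Y s] .
    show "(g has_vector_derivative g' s) (at s within {0..1})" using D unfolding Eq .
    have "norm (g' s) \<le> norm (exp (s *\<^sub>R X)) * norm (s *\<^sub>R (X * D - D * X)) * norm (exp ((1 - s) *\<^sub>R X))"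
      unfolding g'_def by (rule norm3)
    also have "\<dots> \<le> 1 * norm (X * D - D * X) * 1"
      using U s unfolding Ubd_def by (intro mult_mono) (auto intro: mult_left_le_one_le)
    finally show "norm (g' s) \<le> norm (X * D - D * X)" by simp
  qed
  then show ?thesis by (simp add: g_def D_def norm_minus_commute)
qed

lemma exp_neg_cancel:
  fixes x :: "'a::{banach,real_normed_algebra_1}"
  shows "exp x * exp (- x) = 1" "exp (- x) * exp x = 1"
  using exp_add_commuting[of x "-x"] exp_add_commuting[of "-x" x] by simp_all


lemma alg3:
  fixes W Ua Ub E A B :: "'a::real_algebra_1"
  assumes EC: "E * (A * B - B * A) = (A * B - B * A) * E"
    and UA: "Ua * A = A * Ua" and UB: "Ub * B = B * Ub"
  shows "(W * Ua * Ub) * ((- t) *\<^sub>R (E * (A * B - B * A)))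
     + ((W * Ua) * (1 *\<^sub>R (Ub * B)) + (W * (1 *\<^sub>R (Ua * A)) + ((-1) *\<^sub>R (W * (A + B))) * Ua) * Ub) * E
   = W * (- ((B * Ua - Ua * (B + (B * (t *\<^sub>R A) - (t *\<^sub>R A) * B))) * Ub)
          + t *\<^sub>R (Ua * ((A * B - B * A) * Ub - Ub * (A * B - B * A)))) * E"
proof -
  define C where "C = A * B - B * A"
  have EC': "E * C = C * E" using EC by (simp add: C_def)
  define R where "R = - ((A + B) * Ua * Ub) + Ua * A * Ub + Ua * Ub * B - t *\<^sub>R (Ua * Ub * C)"
  have "(W * Ua * Ub) * ((- t) *\<^sub>R (E * C)) = (- t) *\<^sub>R (W * Ua * Ub * (E * C))"
    by simp
  also have "\<dots> = (- t) *\<^sub>R (W * Ua * Ub * C * E)"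
    by (simp only: EC' mult.assoc)
  finally have e0: "(W * Ua * Ub) * ((- t) *\<^sub>R (E * C)) = (- t) *\<^sub>R (W * Ua * Ub * C * E)" .
  have 1: "(W * Ua * Ub) * ((- t) *\<^sub>R (E * C))
     + ((W * Ua) * (1 *\<^sub>R (Ub * B)) + (W * (1 *\<^sub>R (Ua * A)) + ((-1) *\<^sub>R (W * (A + B))) * Ua) * Ub) * E
     = W * R * E"
    unfolding e0 R_def by (simp add: algebra_simps)
  have a: "Ua * A * Ub = A * Ua * Ub" using UA by simp
  have b: "Ua * Ub * B = Ua * B * Ub" using UB by (simp add: mult.assoc)
  have 2: "R = - ((B * Ua - Ua * (B + (B * (t *\<^sub>R A) - (t *\<^sub>R A) * B))) * Ub)
          + t *\<^sub>R (Ua * (C * Ub - Ub * C))"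
    unfolding R_def a b C_def by (simp add: algebra_simps)
  show ?thesis using 1 2 unfolding C_def by simp
qed

lemma BCH_bound:
  fixes A B :: "'a::{banach,real_normed_algebra_1}"
  defines "C \<equiv> A * B - B * A"
  assumes UA: "Ubd A" and UB: "Ubd B" and UAB: "Ubd (A + B)" and UC: "Ubd C"
  shows "norm (exp A * exp B - exp (A + B) * exp ((1/2) *\<^sub>R C))
     \<le> norm (A * C - C * A) + norm (B * C - C * B)"
proof -
  define W where "W t = exp ((- t) *\<^sub>R (A + B))" for t :: real
  define Ua where "Ua t = exp (t *\<^sub>R A)" for t :: real
  define Ub where "Ub t = exp (t *\<^sub>R B)" for t :: real
  define E where "E t = exp ((- (t * t / 2)) *\<^sub>R C)" for t :: real
  define h where "h t = W t * Ua t * Ub t * E t" for t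
  define h' where "h' t = W t * (- ((B * Ua t - Ua t * (B + (B * (t *\<^sub>R A) - (t *\<^sub>R A) * B))) * Ub t)
          + t *\<^sub>R (Ua t * (C * Ub t - Ub t * C))) * E t" for t
  have "norm (h 1 - h 0) \<le> norm (A * C - C * A) + norm (B * C - C * B)"
  proof (rule mvt01)
    fix t :: real assume t: "t \<in> {0..1}"
    have dW: "(W has_vector_derivative ((-1) *\<^sub>R (W t * (A + B)))) (at t within {0..1})"
      unfolding W_def by (rule exp_phi_deriv) (auto intro!: derivative_eq_intros)
    have dUa: "(Ua has_vector_derivative (1 *\<^sub>R (Ua t * A))) (at t within {0..1})"
      unfolding Ua_def by (rule exp_phi_deriv) (auto intro!: derivative_eq_intros)
    have dUb: "(Ub has_vector_derivative (1 *\<^sub>R (Ub t * B))) (at t within {0..1})"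
      unfolding Ub_def by (rule exp_phi_deriv) (auto intro!: derivative_eq_intros)
    have dE: "(E has_vector_derivative ((- t) *\<^sub>R (E t * C))) (at t within {0..1})"
      unfolding E_def by (rule exp_phi_deriv) (auto intro!: derivative_eq_intros)
    have D: "(h has_vector_derivative
       ((W t * Ua t * Ub t) * ((- t) *\<^sub>R (E t * C))
     + ((W t * Ua t) * (1 *\<^sub>R (Ub t * B)) + (W t * (1 *\<^sub>R (Ua t * A)) + ((-1) *\<^sub>R (W t * (A + B))) * Ua t) * Ub t) * E t))
       (at t within {0..1})"
      unfolding h_def
      by (rule has_vector_derivative_mult[OF has_vector_derivative_mult[OF has_vector_derivative_mult[OF dW dUa] dUb] dE])
    have Eq: "(W t * Ua t * Ub t) * ((- t) *\<^sub>R (E t * C))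
     + ((W t * Ua t) * (1 *\<^sub>R (Ub t * B)) + (W t * (1 *\<^sub>R (Ua t * A)) + ((-1) *\<^sub>R (W t * (A + B))) * Ua t) * Ub t) * E t
     = h' t"
      unfolding h'_def C_def
      by (rule alg3) (simp_all only: E_def Ua_def Ub_def C_def[symmetric] exp_scaleR_commute)
    show "(h has_vector_derivative h' t) (at t within {0..1})" using D unfolding Eq .
    have nW: "norm (W t) \<le> 1" using UAB unfolding Ubd_def W_def by blast
    have nE: "norm (E t) \<le> 1" using UC unfolding Ubd_def E_def by blast
    have nUa: "norm (Ua t) \<le> 1" using UA unfolding Ubd_def Ua_def by blast
    have nUb: "norm (Ub t) \<le> 1" using UB unfolding Ubd_def Ub_def by blast
    have e1: "norm (B * Ua t - Ua t * (B + (B * (t *\<^sub>R A) - (t *\<^sub>R A) * B))) \<le> norm (A * C - C * A)"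
    proof -
      have "norm (B * Ua t - Ua t * (B + (B * (t *\<^sub>R A) - (t *\<^sub>R A) * B)))
          \<le> norm ((t *\<^sub>R A) * (B * (t *\<^sub>R A) - (t *\<^sub>R A) * B) - (B * (t *\<^sub>R A) - (t *\<^sub>R A) * B) * (t *\<^sub>R A))"
        unfolding Ua_def by (rule C2[OF Ubd_scale[OF UA]])
      also have "(t *\<^sub>R A) * (B * (t *\<^sub>R A) - (t *\<^sub>R A) * B) - (B * (t *\<^sub>R A) - (t *\<^sub>R A) * B) * (t *\<^sub>R A)
          = (- (t * t)) *\<^sub>R (A * C - C * A)"
        unfolding C_def by (simp add: algebra_simps)
      also have "norm ((- (t * t)) *\<^sub>R (A * C - C * A)) \<le> norm (A * C - C * A)"
        using t by (auto intro!: mult_left_le_one_le mult_le_one simp: abs_mult)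
      finally show ?thesis .
    qed
    have e2: "norm (C * Ub t - Ub t * C) \<le> norm (B * C - C * B)"
    proof -
      have "norm (C * Ub t - Ub t * C) \<le> norm ((t *\<^sub>R B) * C - C * (t *\<^sub>R B))"
        unfolding Ub_def by (rule C1[OF Ubd_scale[OF UB]])
      also have "(t *\<^sub>R B) * C - C * (t *\<^sub>R B) = t *\<^sub>R (B * C - C * B)"
        by (simp add: algebra_simps)
      also have "norm (t *\<^sub>R (B * C - C * B)) \<le> norm (B * C - C * B)"
        using t by (auto intro!: mult_left_le_one_le)
      finally show ?thesis .
    qed
    define Q where "Q = - ((B * Ua t - Ua t * (B + (B * (t *\<^sub>R A) - (t *\<^sub>R A) * B))) * Ub t)
          + t *\<^sub>R (Ua t * (C * Ub t - Ub t * C))"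
    have "norm Q \<le> norm (B * Ua t - Ua t * (B + (B * (t *\<^sub>R A) - (t *\<^sub>R A) * B))) * norm (Ub t)
          + \<bar>t\<bar> * (norm (Ua t) * norm (C * Ub t - Ub t * C))"
      unfolding Q_def
      by (rule order_trans[OF norm_triangle_ineq]) (auto intro!: add_mono norm_mult_ineq mult_left_mono simp: norm_minus_cancel)
    also have "\<dots> \<le> norm (A * C - C * A) * 1 + 1 * (1 * norm (B * C - C * B))"
      using t e1 e2 nUa nUb
      by (intro add_mono mult_mono) auto
    finally have nQ: "norm Q \<le> norm (A * C - C * A) + norm (B * C - C * B)" by simp
    have "norm (h' t) \<le> norm (W t) * norm Q * norm (E t)"
      unfolding h'_def Q_def[symmetric] by (rule norm3)
    also have "\<dots> \<le> 1 * norm Q * 1"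
      using nW nE by (intro mult_mono) auto
    finally show "norm (h' t) \<le> norm (A * C - C * A) + norm (B * C - C * B)" using nQ by simp
  qed
  moreover have "exp A * exp B - exp (A + B) * exp ((1/2) *\<^sub>R C) = exp (A + B) * (h 1 - h 0) * exp ((1/2) *\<^sub>R C)"
  proof -
    have h0: "h 0 = 1" by (simp add: h_def W_def Ua_def Ub_def E_def)
    have h1: "h 1 = exp (- (A + B)) * exp A * exp B * exp (- ((1/2) *\<^sub>R C))"
      by (simp add: h_def W_def Ua_def Ub_def E_def)
    have "exp (A + B) * h 1 * exp ((1/2) *\<^sub>R C)
       = (exp (A + B) * exp (- (A + B))) * exp A * exp B * (exp (- ((1/2) *\<^sub>R C)) * exp ((1/2) *\<^sub>R C))"
      unfolding h1 by (simp add: mult.assoc)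
    also have "\<dots> = exp A * exp B" by (simp only: exp_neg_cancel mult_1_left mult_1_right)
    finally show ?thesis unfolding h0 by (simp add: algebra_simps)
  qed
  moreover have "norm (exp (A + B) * (h 1 - h 0) * exp ((1/2) *\<^sub>R C)) \<le> norm (h 1 - h 0)"
  proof -
    have "norm (exp (A + B) * (h 1 - h 0) * exp ((1/2) *\<^sub>R C)) \<le> norm (exp (A + B)) * norm (h 1 - h 0) * norm (exp ((1/2) *\<^sub>R C))"
      by (rule norm3)
    also have "\<dots> \<le> 1 * norm (h 1 - h 0) * 1"
    proof -
      have "norm (exp (A + B)) \<le> 1" using UAB unfolding Ubd_def by (metis scaleR_one)
      moreover have "norm (exp ((1/2) *\<^sub>R C)) \<le> 1" using UC unfolding Ubd_def by blast
      ultimately show ?thesis by (intro mult_mono) auto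
    qed
    finally show ?thesis by simp
  qed
  ultimately show ?thesis by simp
qed



locale cstar =
  fixes sm :: "complex \<Rightarrow> 'a::{banach,real_normed_algebra_1} \<Rightarrow> 'a"
    and st :: "'a \<Rightarrow> 'a"
  assumes cs: "cstar_algebra sm st"
begin

lemma sm_real: "sm (complex_of_real r) x = r *\<^sub>R x"
  using cs unfolding cstar_algebra_def by (elim conjE) simp
lemma sm_mult: "sm (c * d) x = sm c (sm d x)"
  using cs unfolding cstar_algebra_def by (elim conjE) simp
lemma sm_addc: "sm (c + d) x = sm c x + sm d x"
  using cs unfolding cstar_algebra_def by (elim conjE) simp
lemma sm_add: "sm c (x + y) = sm c x + sm c y"
  using cs unfolding cstar_algebra_def by (elim conjE) simp
lemma sm_multl: "sm c (x * y) = sm c x * y"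
  using cs unfolding cstar_algebra_def by (elim conjE) simp
lemma sm_multr: "sm c (x * y) = x * sm c y"
  using cs unfolding cstar_algebra_def by (elim conjE) metis
lemma norm_sm: "norm (sm c x) = cmod c * norm x"
  using cs unfolding cstar_algebra_def by (elim conjE) simp
lemma st_st[simp]: "st (st x) = x"
  using cs unfolding cstar_algebra_def by (elim conjE) simp
lemma st_add: "st (x + y) = st x + st y"
  using cs unfolding cstar_algebra_def by (elim conjE) simp
lemma st_sm: "st (sm c x) = sm (cnj c) (st x)"
  using cs unfolding cstar_algebra_def by (elim conjE) simp
lemma st_mult: "st (x * y) = st y * st x"
  using cs unfolding cstar_algebra_def by (elim conjE) simp
lemma cstar_id: "norm (st x * x) = (norm x)\<^sup>2"
  using cs unfolding cstar_algebra_def by (elim conjE) simp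

lemma sm_one[simp]: "sm 1 x = x"
  using sm_real[of 1 x] by simp
lemma sm_zero[simp]: "sm 0 x = 0"
  using sm_real[of 0 x] by simp
lemma sm_minus1: "sm (-1) x = - x"
  using sm_real[of "-1" x] by simp
lemma sm_scaleR: "sm c (r *\<^sub>R x) = r *\<^sub>R sm c x"
proof -
  have "sm c (r *\<^sub>R x) = sm c (sm (complex_of_real r) x)" by (simp add: sm_real)
  also have "\<dots> = sm (complex_of_real r) (sm c x)" by (simp add: sm_mult[symmetric] mult.commute)
  finally show ?thesis by (simp add: sm_real)
qed
lemma sm_zero_right[simp]: "sm c 0 = 0"
  using sm_scaleR[of c 0 0] by simp
lemma sm_minus: "sm c (- x) = - sm c x"
  using sm_scaleR[of c "-1" x] by simp
lemma sm_diff: "sm c (x - y) = sm c x - sm c y"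
  using sm_add[of c x "- y"] sm_minus by simp
lemma sm_ii: "sm \<i> (sm \<i> x) = - x"
  using sm_mult[of \<i> \<i> x] sm_minus1 by simp

lemma st_zero[simp]: "st 0 = 0"
  using st_add[of 0 0] by simp
lemma st_minus: "st (- x) = - st x"
  using st_add[of x "- x"] by (metis add.commute add.right_inverse minus_unique st_zero)
lemma st_diff: "st (x - y) = st x - st y"
  using st_add[of x "- y"] st_minus by simp
lemma st_scaleR: "st (r *\<^sub>R x) = r *\<^sub>R st x"
  using st_sm[of "complex_of_real r" x] by (simp add: sm_real)
lemma st_one[simp]: "st 1 = 1"
proof -
  have "st 1 = st 1 * st (st 1)" by simp
  also have "\<dots> = st (st 1 * 1)" by (simp only: st_mult)
  also have "\<dots> = 1" by simp
  finally show ?thesis .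
qed

lemma norm_st_le: "norm x \<le> norm (st x)"
proof (cases "x = 0")
  case True then show ?thesis by simp
next
  case False
  have "(norm x)\<^sup>2 \<le> norm (st x) * norm x"
    using cstar_id[of x] norm_mult_ineq[of "st x" x] by simp
  then show ?thesis using False by (simp add: power2_eq_square)
qed
lemma norm_st[simp]: "norm (st x) = norm x"
  using norm_st_le[of x] norm_st_le[of "st x"] by simp

lemma bl_st: "bounded_linear st"
  by (rule bounded_linear_intro[where K=1]) (auto simp: st_add st_scaleR)

lemma st_power: "st (x ^ n) = (st x) ^ n"
  by (induction n) (auto simp: st_mult power_commutes)

lemma st_exp: "st (exp x) = exp (st x)"
proof -
  have "st (exp x) = st (\<Sum>n. x ^ n /\<^sub>R fact n)" by (simp add: exp_def)
  also have "\<dots> = (\<Sum>n. st (x ^ n /\<^sub>R fact n))"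
    by (rule bounded_linear.suminf[OF bl_st summable_exp_generic])
  also have "\<dots> = (\<Sum>n. (st x) ^ n /\<^sub>R fact n)" by (simp add: st_scaleR st_power)
  finally show ?thesis by (simp add: exp_def)
qed

lemma Ubd_skew:
  assumes "st X = - X"
  shows "Ubd X"
  unfolding Ubd_def
proof
  fix r
  have "st (exp (r *\<^sub>R X)) * exp (r *\<^sub>R X) = 1"
    by (simp add: st_exp st_scaleR assms exp_neg_cancel(2)[of "r *\<^sub>R X", simplified])
  then have "(norm (exp (r *\<^sub>R X)))\<^sup>2 = 1" using cstar_id[of "exp (r *\<^sub>R X)"] by simp
  then show "norm (exp (r *\<^sub>R X)) \<le> 1"
    by (auto simp: power2_eq_1_iff)
qed

lemma skew_i: "st a = a \<Longrightarrow> st (sm \<i> a) = - sm \<i> a"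
  using st_sm[of \<i> a] sm_mult[of "-1" \<i> a] sm_minus1 by simp

end



lemma gbin_rec:
  fixes a :: real
  shows "(of_nat k + 1) * (a gchoose Suc k) = (a gchoose k) * (a - of_nat k)"
proof -
  have "fact (Suc k) * (a gchoose Suc k) = (\<Prod>i = 0..<Suc k. a - of_nat i)"
    by (rule gbinomial_mult_fact)
  also have "\<dots> = (\<Prod>i = 0..<k. a - of_nat i) * (a - of_nat k)" by simp
  also have "\<dots> = fact k * (a gchoose k) * (a - of_nat k)" by (simp add: gbinomial_mult_fact)
  finally have "fact k * ((of_nat k + 1) * (a gchoose Suc k)) = fact k * ((a gchoose k) * (a - of_nat k))"
    by (simp add: algebra_simps)
  then show ?thesis by simp
qed

lemma gbin_half_le: "\<bar>(1/2::real) gchoose n\<bar> \<le> 1"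
proof (induction n)
  case 0 then show ?case by simp
next
  case (Suc k)
  have "(of_nat k + 1) * \<bar>(1/2::real) gchoose Suc k\<bar> = \<bar>(1/2::real) gchoose k\<bar> * \<bar>1/2 - of_nat k\<bar>"
    using arg_cong[OF gbin_rec[of k "1/2"], of abs] by (simp add: abs_mult)
  also have "\<dots> \<le> 1 * (of_nat k + 1)"
    using Suc by (intro mult_mono) auto
  finally show ?case by simp
qed

lemma sqrt_exists:
  fixes u :: "'a::{banach,real_normed_algebra_1}"
  assumes nu: "norm u < 1"
  shows "\<exists>w. w * w = 1 - u \<and> (\<forall>h. h * u = u * h \<longrightarrow> h * w = w * h)
           \<and> (\<forall>f. bounded_linear f \<and> (\<forall>n. f (u ^ n) = u ^ n) \<longrightarrow> f w = w)"
proof -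
  define c where "c n = (-1) ^ n * ((1/2::real) gchoose n)" for n
  define a where "a n = c n *\<^sub>R u ^ n" for n
  have cle: "\<bar>c n\<bar> \<le> 1" for n
    by (simp add: c_def abs_mult gbin_half_le)
  have na: "norm (a n) \<le> norm u ^ n" for n
  proof -
    have "norm (a n) = \<bar>c n\<bar> * norm (u ^ n)" by (simp add: a_def)
    also have "\<dots> \<le> 1 * norm u ^ n"
      using cle by (intro mult_mono norm_power_ineq) auto
    finally show ?thesis by simp
  qed
  have sna: "summable (\<lambda>n. norm (a n))"
    by (rule summable_comparison_test[OF _ summable_geometric[of "norm u"]])
       (use nu na in auto)
  have sa: "summable a" using sna by (rule summable_norm_cancel)
  define w where "w = suminf a"
  have prod: "a i * a (k - i) = (c i * c (k - i)) *\<^sub>R u ^ k" if "i \<le> k" for i k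
  proof -
    have "a i * a (k - i) = (c i * c (k - i)) *\<^sub>R (u ^ i * u ^ (k - i))"
      by (simp add: a_def)
    also have "u ^ i * u ^ (k - i) = u ^ k" using that by (simp add: power_add[symmetric])
    finally show ?thesis .
  qed
  have csum: "(\<Sum>i\<le>k. c i * c (k - i)) = (-1) ^ k * (1 gchoose k)" for k
  proof -
    have "(\<Sum>i\<le>k. c i * c (k - i)) = (\<Sum>i\<le>k. (-1) ^ k * (((1/2::real) gchoose i) * ((1/2) gchoose (k - i))))"
    proof (rule sum.cong)
      fix i assume "i \<in> {..k}"
      then have "(-1::real) ^ i * (-1) ^ (k - i) = (-1) ^ k"
        by (simp add: power_add[symmetric])
      then show "c i * c (k - i) = (-1) ^ k * (((1/2::real) gchoose i) * ((1/2) gchoose (k - i)))"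
        unfolding c_def by (metis (no_types, lifting) mult.assoc mult.left_commute)
    qed simp
    also have "\<dots> = (-1) ^ k * (\<Sum>i=0..k. ((1/2::real) gchoose i) * ((1/2) gchoose (k - i)))"
      by (simp add: sum_distrib_left atLeast0AtMost)
    also have "\<dots> = (-1) ^ k * (1 gchoose k)"
      using gbinomial_Vandermonde[of "1/2::real" "1/2" k] by simp
    finally show ?thesis .
  qed
  have one_choose: "((1::real) gchoose k) = (if k = 0 then 1 else if k = 1 then 1 else 0)" for k
  proof -
    have "((1::real) gchoose k) = of_nat (1 choose k)"
      using binomial_gbinomial[of 1 k, where 'a=real] by simp
    then show ?thesis by (cases k) (auto simp: binomial_eq_0)
  qed
  have terms: "(\<Sum>i\<le>k. a i * a (k - i)) = (if k = 0 then 1 else if k = 1 then - u else 0)" for k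
  proof -
    have "(\<Sum>i\<le>k. a i * a (k - i)) = (\<Sum>i\<le>k. (c i * c (k - i)) *\<^sub>R u ^ k)"
      by (rule sum.cong) (auto simp: prod)
    also have "\<dots> = (\<Sum>i\<le>k. c i * c (k - i)) *\<^sub>R u ^ k"
      by (simp add: scaleR_sum_left)
    also have "\<dots> = (if k = 0 then 1 else if k = 1 then - u else 0)"
      unfolding csum one_choose by auto
    finally show ?thesis .
  qed
  have "(\<lambda>k. \<Sum>i\<le>k. a i * a (k - i)) sums (w * w)"
    unfolding w_def by (rule Cauchy_product_sums[OF sna sna])
  moreover have "(\<lambda>k. \<Sum>i\<le>k. a i * a (k - i)) sums (1 - u)"
  proof -
    have "(\<lambda>k. \<Sum>i\<le>k. a i * a (k - i)) sums (\<Sum>k\<in>{0,1}. (\<Sum>i\<le>k. a i * a (k - i)))"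
      by (rule sums_finite) (auto simp: terms)
    then show ?thesis by (simp add: terms)
  qed
  ultimately have ww: "w * w = 1 - u" by (rule sums_unique2)
  have comm: "h * w = w * h" if hu: "h * u = u * h" for h
  proof -
    have "h * w = (\<Sum>n. h * a n)" unfolding w_def by (rule suminf_mult[OF sa, symmetric])
    also have "\<dots> = (\<Sum>n. a n * h)"
    proof -
      have "h * a n = a n * h" for n
        using power_commuting_commutes[OF hu[symmetric], of n] by (simp add: a_def)
      then show ?thesis by simp
    qed
    also have "\<dots> = w * h" unfolding w_def by (rule suminf_mult2[OF sa, symmetric])
    finally show ?thesis .
  qed
  have fixw: "f w = w" if f: "bounded_linear f" and fu: "\<forall>n. f (u ^ n) = u ^ n" for f
  proof -
    have "f w = (\<Sum>n. f (a n))" unfolding w_def by (rule bounded_linear.suminf[OF f sa])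
    also have "\<dots> = (\<Sum>n. a n)"
      using fu linear.scaleR[OF bounded_linear.linear[OF f]] by (simp add: a_def)
    finally show ?thesis by (simp add: w_def)
  qed
  show ?thesis using ww comm fixw by blast
qed



context cstar
begin

lemma sm_negi: "sm (- \<i>) w = - sm \<i> w"
  using sm_mult[of "-1" \<i> w] sm_minus1 by simp

lemma aut_props:
  assumes g: "star_automorphism sm st g"
  shows "g (x + y) = g x + g y" "g (x * y) = g x * g y" "g (sm c x) = sm c (g x)"
    "g (st x) = st (g x)" "g 1 = 1"
  using g unfolding star_automorphism_def by auto

lemma aut_zero: "star_automorphism sm st g \<Longrightarrow> g 0 = 0"
  using aut_props(1)[of g 0 0] by simp

lemma aut_scaleR: "star_automorphism sm st g \<Longrightarrow> g (r *\<^sub>R x) = r *\<^sub>R g x"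
  using aut_props(3)[of g "complex_of_real r" x] by (simp add: sm_real)

lemma aut_norm_sa_lt1:
  assumes g: "star_automorphism sm st g" and h: "st h = h" and nh: "norm h < 1"
  shows "norm (g h) \<le> 1"
proof -
  define u where "u = h * h"
  have "norm u \<le> norm h * norm h" unfolding u_def by (rule norm_mult_ineq)
  also have "\<dots> \<le> norm h" using nh by (intro mult_left_le_one_le) auto
  also have "\<dots> < 1" using nh .
  finally have nu: "norm u < 1" .
  have stu: "st u = u" unfolding u_def by (simp add: st_mult h)
  obtain w where ww: "w * w = 1 - u" and cw: "\<And>h'. h' * u = u * h' \<Longrightarrow> h' * w = w * h'"
    and fw: "\<And>f. bounded_linear f \<Longrightarrow> (\<forall>n. f (u ^ n) = u ^ n) \<Longrightarrow> f w = w"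
    using sqrt_exists[OF nu] by blast
  have hw: "h * w = w * h" by (rule cw) (simp add: u_def mult.assoc)
  have sw: "st w = w" by (rule fw[OF bl_st]) (simp add: st_power stu)
  define v where "v = h + sm \<i> w"
  have stv: "st v = h - sm \<i> w" unfolding v_def by (simp add: st_add st_sm h sw sm_negi)
  have "st v * v = h * h + (h * sm \<i> w - sm \<i> w * h) - sm \<i> w * sm \<i> w"
    unfolding stv by (simp add: v_def algebra_simps)
  also have "h * sm \<i> w - sm \<i> w * h = 0"
    using hw by (simp add: sm_multr[symmetric] sm_multl[symmetric])
  also have "sm \<i> w * sm \<i> w = - (w * w)"
    by (simp add: sm_multr[symmetric] sm_multl[symmetric] sm_ii)
  finally have svv: "st v * v = 1" using ww by (simp add: u_def)
  have "st (g v) * g v = 1"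
    using svv aut_props[OF g] by metis
  then have "(norm (g v))\<^sup>2 = 1" using cstar_id[of "g v"] by simp
  then have ngv: "norm (g v) = 1" by (metis norm_ge_zero power2_eq_1_iff neg_0_le_iff_le not_one_le_zero)
  have "g v + st (g v) = g (v + st v)" using aut_props[OF g] by simp
  also have "v + st v = 2 *\<^sub>R h" unfolding stv by (simp add: v_def scaleR_2)
  also have "g (2 *\<^sub>R h) = 2 *\<^sub>R g h" by (rule aut_scaleR[OF g])
  finally have "g h = (1/2) *\<^sub>R (g v + st (g v))" by simp
  then have "norm (g h) \<le> (1/2) * (norm (g v) + norm (st (g v)))"
    using norm_triangle_ineq[of "g v" "st (g v)"] by simp
  also have "\<dots> = 1" using ngv by simp
  finally show ?thesis .
qed

lemma aut_norm_sa:
  assumes g: "star_automorphism sm st g" and h: "st h = h"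
  shows "norm (g h) \<le> norm h"
proof (rule dense_ge)
  fix r assume r: "norm h < r"
  then have rpos: "r > 0" by (meson norm_ge_zero le_less_trans)
  have "st ((1/r) *\<^sub>R h) = (1/r) *\<^sub>R h" by (simp add: st_scaleR h)
  moreover have "norm ((1/r) *\<^sub>R h) < 1" using r rpos by (simp add: divide_less_eq)
  ultimately have "norm (g ((1/r) *\<^sub>R h)) \<le> 1" by (rule aut_norm_sa_lt1[OF g])
  then have "norm (g h) / r \<le> 1" using rpos by (simp add: aut_scaleR[OF g])
  then show "norm (g h) \<le> r" using rpos by (simp add: divide_le_eq)
qed

lemma aut_norm:
  assumes g: "star_automorphism sm st g"
  shows "norm (g z) \<le> norm z"
proof -
  have "(norm (g z))\<^sup>2 = norm (g (st z * z))"
    using cstar_id[of "g z"] aut_props[OF g] by simp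
  also have "\<dots> \<le> norm (st z * z)"
    by (rule aut_norm_sa[OF g]) (simp add: st_mult)
  also have "\<dots> = (norm z)\<^sup>2" by (rule cstar_id)
  finally show ?thesis by (rule power2_le_imp_le) simp
qed

lemma state_real:
  assumes w: "is_state sm st \<omega>" and h: "st h = h"
  shows "cnj (\<omega> h) = \<omega> h"
proof -
  have add: "\<omega> (x + y) = \<omega> x + \<omega> y" for x y using w unfolding is_state_def by blast
  have pos: "\<exists>r\<ge>0. \<omega> (st x * x) = complex_of_real r" for x using w unfolding is_state_def by blast
  have one: "\<omega> 1 = 1" using w unfolding is_state_def by blast
  obtain r1 where r1: "\<omega> (st (1 + h) * (1 + h)) = complex_of_real r1" using pos by blast
  obtain r2 where r2: "\<omega> (st h * h) = complex_of_real r2" using pos by blast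
  have "st (1 + h) * (1 + h) = 1 + (h + (h + h * h))" by (simp add: st_add h algebra_simps)
  then have "complex_of_real r1 = 1 + (\<omega> h + (\<omega> h + complex_of_real r2))"
    using r1 r2 h by (simp add: add one)
  then have "Im (\<omega> h) = 0" by (metis Im_complex_of_real add.right_neutral complex_eq_iff add_cancel_right_left
      one_complex.simps(2) plus_complex.simps(2) mult_2[symmetric] mult_eq_0_iff zero_neq_numeral)
  then show ?thesis by (simp add: complex_eq_iff)
qed

end



context cstar
begin

lemma smi_mult: "sm \<i> a * sm \<i> b = - (a * b)"
proof -
  have "sm \<i> a * sm \<i> b = sm \<i> (a * sm \<i> b)" by (simp add: sm_multl)
  also have "\<dots> = sm \<i> (sm \<i> (a * b))" by (simp add: sm_multr)
  finally show ?thesis by (simp add: sm_ii)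
qed

lemma smi_comm: "sm \<i> a * c - c * sm \<i> a = sm \<i> (a * c - c * a)"
  by (simp only: sm_diff sm_multl[of \<i> a c] sm_multr[of \<i> c a])

lemma Lfun_bound:
  assumes a: "st a = a" and b: "st b = b"
  shows "norm (Lfun sm a b) \<le> norm (a * (a * b - b * a) - (a * b - b * a) * a)
                             + norm (b * (a * b - b * a) - (a * b - b * a) * b)"
proof -
  define A where "A = sm \<i> a"
  define B where "B = sm \<i> b"
  define c where "c = a * b - b * a"
  have C: "A * B - B * A = - c" unfolding A_def B_def c_def by (simp add: smi_mult)
  have AB: "A + B = sm \<i> (a + b)" unfolding A_def B_def by (simp add: sm_add)
  have L: "Lfun sm a b = exp A * exp B - exp (A + B) * exp ((1/2) *\<^sub>R (A * B - B * A))"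
  proof -
    have h: "(1/2) *\<^sub>R (A * B - B * A) = - ((1/2) *\<^sub>R (a * b - b * a))" by (simp add: C c_def algebra_simps)
    show ?thesis unfolding h AB unfolding A_def B_def Lfun_def ..
  qed
  have UA: "Ubd A" unfolding A_def by (rule Ubd_skew[OF skew_i[OF a]])
  have UB: "Ubd B" unfolding B_def by (rule Ubd_skew[OF skew_i[OF b]])
  have UAB: "Ubd (A + B)" unfolding AB by (rule Ubd_skew[OF skew_i]) (simp add: st_add a b)
  have stc: "st c = - c" unfolding c_def by (simp add: st_diff st_mult a b)
  have UC: "Ubd (A * B - B * A)" unfolding C by (rule Ubd_skew) (simp add: st_minus stc)
  have "norm (Lfun sm a b) \<le> norm (A * (A * B - B * A) - (A * B - B * A) * A) + norm (B * (A * B - B * A) - (A * B - B * A) * B)"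
    unfolding L by (rule BCH_bound[OF UA UB UAB UC])
  also have "norm (A * (A * B - B * A) - (A * B - B * A) * A) = norm (a * c - c * a)"
  proof -
    have "A * (A * B - B * A) - (A * B - B * A) * A = - (sm \<i> a * c - c * sm \<i> a)"
      unfolding C by (simp add: A_def algebra_simps)
    then show ?thesis by (simp add: smi_comm norm_sm)
  qed
  also have "norm (B * (A * B - B * A) - (A * B - B * A) * B) = norm (b * c - c * b)"
  proof -
    have "B * (A * B - B * A) - (A * B - B * A) * B = - (sm \<i> b * c - c * sm \<i> b)"
      unfolding C by (simp add: B_def algebra_simps)
    then show ?thesis by (simp add: smi_comm norm_sm)
  qed
  finally show ?thesis by (simp add: c_def)
qed

end



definition cm :: "'a::ring \<Rightarrow> 'a \<Rightarrow> 'a" where "cm u v = u * v - v * u"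

lemma cm_sum_left: "cm (sum f I) v = (\<Sum>i\<in>I. cm (f i) v)"
  unfolding cm_def by (simp add: sum_distrib_right sum_distrib_left sum_subtractf)
lemma cm_sum_right: "cm u (sum f I) = (\<Sum>i\<in>I. cm u (f i))"
  unfolding cm_def by (simp add: sum_distrib_right sum_distrib_left sum_subtractf)
lemma cm_scale_left: "cm (r *\<^sub>R u) v = r *\<^sub>R cm u (v::'a::real_algebra)"
  unfolding cm_def by (simp add: algebra_simps)
lemma cm_scale_right: "cm u (r *\<^sub>R v) = r *\<^sub>R cm u (v::'a::real_algebra)"
  unfolding cm_def by (simp add: algebra_simps)
lemma cm_zero: "u * v = v * u \<Longrightarrow> cm u v = 0"
  unfolding cm_def by simp
lemma norm_cm: "norm (cm u v) \<le> 2 * norm u * norm (v::'a::real_normed_algebra)"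
proof -
  have "norm (cm u v) \<le> norm (u * v) + norm (v * u)" unfolding cm_def by (rule norm_triangle_ineq4)
  also have "\<dots> \<le> norm u * norm v + norm v * norm u" by (intro add_mono norm_mult_ineq)
  finally show ?thesis by simp
qed

lemma cm_cm_zero:
  assumes "u * v = v * u" "u * w = w * u"
  shows "cm u (cm v w) = 0"
proof -
  have h1: "u * (v * w) = v * (w * u)" by (metis assms mult.assoc)
  have h2: "u * (w * v) = w * (v * u)" by (metis assms mult.assoc)
  show ?thesis unfolding cm_def by (simp add: right_diff_distrib left_diff_distrib mult.assoc h1 h2)
qed

lemma count_near:
  fixes I :: "int set" and D :: nat
  assumes "finite I"
  shows "(\<Sum>j\<in>I. (if \<bar>i - j\<bar> \<le> 2 * int D then 1 else 0::real)) \<le> real (4 * D + 1)"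
proof -
  have "(\<Sum>j\<in>I. (if \<bar>i - j\<bar> \<le> 2 * int D then 1 else 0::real)) = real (card (I \<inter> {j. \<bar>i - j\<bar> \<le> 2 * int D}))"
    using assms by (simp add: sum.If_cases)
  also have "card (I \<inter> {j. \<bar>i - j\<bar> \<le> 2 * int D}) \<le> card {i - 2 * int D .. i + 2 * int D}"
    by (rule card_mono) auto
  also have "card {i - 2 * int D .. i + 2 * int D} = 4 * D + 1" by simp
  finally show ?thesis by simp
qed

lemma triple_bound:
  fixes P Q S :: "int \<Rightarrow> 'a::real_normed_algebra"
  assumes I: "finite I"
    and cPQ: "\<And>i j. int D < \<bar>i - j\<bar> \<Longrightarrow> P i * Q j = Q j * P i"
    and cPS: "\<And>i j. int D < \<bar>i - j\<bar> \<Longrightarrow> P i * S j = S j * P i"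
    and cQS: "\<And>i j. int D < \<bar>i - j\<bar> \<Longrightarrow> Q i * S j = S j * Q i"
    and bP: "\<And>i. norm (P i) \<le> Kp" and bQ: "\<And>i. norm (Q i) \<le> Kq" and bS: "\<And>i. norm (S i) \<le> Ks"
  shows "norm (\<Sum>i\<in>I. \<Sum>j\<in>I. \<Sum>k\<in>I. cm (P i) (cm (Q j) (S k)))
     \<le> real (card I) * (real (4 * D + 1))\<^sup>2 * (4 * Kp * Kq * Ks)"
proof -
  define B where "B = 4 * Kp * Kq * Ks"
  define f where "f i j = (if \<bar>i - j\<bar> \<le> 2 * int D then 1 else 0::real)" for i j :: int
  have Kp: "Kp \<ge> 0" using bP[of 0] norm_ge_zero[of "P 0"] by linarith
  have Kq: "Kq \<ge> 0" using bQ[of 0] norm_ge_zero[of "Q 0"] by linarith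
  have Ks: "Ks \<ge> 0" using bS[of 0] norm_ge_zero[of "S 0"] by linarith
  have B0: "B \<ge> 0" using Kp Kq Ks by (simp add: B_def)
  have tb: "norm (cm (P i) (cm (Q j) (S k))) \<le> B * f i j * f i k" for i j k
  proof (cases "\<bar>i - j\<bar> \<le> 2 * int D \<and> \<bar>i - k\<bar> \<le> 2 * int D")
    case True
    have "norm (cm (P i) (cm (Q j) (S k))) \<le> 2 * norm (P i) * norm (cm (Q j) (S k))" by (rule norm_cm)
    also have "\<dots> \<le> 2 * Kp * (2 * Kq * Ks)"
    proof (intro mult_mono)
      show "norm (cm (Q j) (S k)) \<le> 2 * Kq * Ks"
        using norm_cm[of "Q j" "S k"] bQ[of j] bS[of k] Kq
        by (meson mult_left_mono mult_mono norm_ge_zero order_trans zero_le_numeral mult_nonneg_nonneg)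
    qed (use bP Kp in auto)
    finally show ?thesis using True by (simp add: B_def f_def)
  next
    case False
    have "cm (P i) (cm (Q j) (S k)) = 0"
    proof (cases "\<bar>j - k\<bar> \<le> int D")
      case True
      with False have "int D < \<bar>i - j\<bar> \<and> int D < \<bar>i - k\<bar>" by auto
      then show ?thesis by (intro cm_cm_zero cPQ cPS) auto
    next
      case False
      then have "cm (Q j) (S k) = 0" by (intro cm_zero cQS) auto
      then show ?thesis by (simp add: cm_def)
    qed
    then show ?thesis using B0 by (auto simp: f_def)
  qed
  have "norm (\<Sum>i\<in>I. \<Sum>j\<in>I. \<Sum>k\<in>I. cm (P i) (cm (Q j) (S k)))
      \<le> (\<Sum>i\<in>I. \<Sum>j\<in>I. \<Sum>k\<in>I. norm (cm (P i) (cm (Q j) (S k))))"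
    by (rule order_trans[OF norm_sum sum_mono], rule order_trans[OF norm_sum sum_mono], rule norm_sum)
  also have "\<dots> \<le> (\<Sum>i\<in>I. \<Sum>j\<in>I. \<Sum>k\<in>I. B * f i j * f i k)"
    by (intro sum_mono tb)
  also have "\<dots> = (\<Sum>i\<in>I. B * ((\<Sum>j\<in>I. f i j) * (\<Sum>k\<in>I. f i k)))"
    unfolding sum_product unfolding sum_distrib_left by (simp add: mult.assoc)
  also have "\<dots> \<le> (\<Sum>i\<in>I. B * (real (4 * D + 1) * real (4 * D + 1)))"
  proof (intro sum_mono mult_left_mono B0)
    fix i
    have f0: "0 \<le> (\<Sum>j\<in>I. f i j)" for i by (intro sum_nonneg) (simp add: f_def)
    show "(\<Sum>j\<in>I. f i j) * (\<Sum>k\<in>I. f i k) \<le> real (4 * D + 1) * real (4 * D + 1)"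
      using count_near[OF I, of i D] f0[of i] unfolding f_def[symmetric]
      by (intro mult_mono) auto
  qed
  also have "\<dots> = real (card I) * (real (4 * D + 1))\<^sup>2 * B"
    by (simp add: power2_eq_square)
  finally show ?thesis by (simp add: B_def)
qed



context cstar
begin

lemma st_sum: "st (sum f A) = (\<Sum>x\<in>A. st (f x))"
  by (induction A rule: infinite_finite_induct) (auto simp: st_add)

lemma sm1_central: "sm c 1 * z = z * sm c 1"
  using sm_multl[of c 1 z] sm_multr[of c z 1] by simp

lemma shifted_comm:
  assumes "u * v = v * u"
  shows "(u - sm a 1) * (v - sm b 1) = (v - sm b 1) * (u - sm a 1)"
proof -
  have "(u - sm a 1) * (v - sm b 1) = u * v - sm a 1 * v - u * sm b 1 + sm a 1 * sm b 1"
    by (simp add: algebra_simps)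
  also have "\<dots> = v * u - v * sm a 1 - sm b 1 * u + sm b 1 * sm a 1"
    using assms sm1_central[of a v] sm1_central[of b u] sm1_central[of a "sm b 1"] by simp
  also have "\<dots> = (v - sm b 1) * (u - sm a 1)" by (simp add: algebra_simps)
  finally show ?thesis .
qed

end

lemma fin_intervals_finite: "I \<in> fin_intervals \<Longrightarrow> finite I"
  unfolding fin_intervals_def by auto

lemma interval_fin: "a \<le> b \<Longrightarrow> {a..b} \<in> fin_intervals"
  unfolding fin_intervals_def by auto

lemma shift_interval: "(\<lambda>k. k + j) ` {a..b::int} = {a + j..b + j}"
proof
  show "{a + j..b + j} \<subseteq> (\<lambda>k. k + j) ` {a..b}"
  proof
    fix m assume "m \<in> {a + j..b + j}"
    then show "m \<in> (\<lambda>k. k + j) ` {a..b}" by (intro image_eqI[where x="m - j"]) auto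
  qed
qed auto

lemma card_tendsto:
  fixes In :: "nat \<Rightarrow> int set"
  assumes fin: "\<forall>n. In n \<in> fin_intervals" and inc: "incseq In" and un: "(\<Union>n. In n) = UNIV"
  shows "filterlim (\<lambda>n. real (card (In n))) at_top sequentially"
proof -
  have "\<exists>n0. {0..int m} \<subseteq> In n0" for m
  proof -
    have "\<forall>k\<in>{0..int m}. \<exists>n. k \<in> In n" using un by blast
    then obtain nk where nk: "\<And>k. k \<in> {0..int m} \<Longrightarrow> k \<in> In (nk k)" by metis
    define n0 where "n0 = Max (nk ` {0..int m})"
    have "In (nk k) \<subseteq> In n0" if "k \<in> {0..int m}" for k
      using inc that unfolding n0_def by (intro monoD[OF inc] Max_ge) auto
    then show ?thesis using nk by blast
  qed
  then obtain n0 where n0: "\<And>m. {0..int m} \<subseteq> In (n0 m)" by metis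
  have "\<forall>\<^sub>F n in sequentially. real m \<le> real (card (In n))" for m
  proof (rule eventually_sequentiallyI[of "n0 m"])
    fix n assume "n0 m \<le> n"
    then have "{0..int m} \<subseteq> In n" using n0[of m] monoD[OF inc] by blast
    then have "card {0..int m} \<le> card (In n)"
      by (rule card_mono[OF fin_intervals_finite[OF fin[rule_format]]])
    then show "real m \<le> real (card (In n))" by simp
  qed
  then show ?thesis unfolding filterlim_at_top
  proof (intro allI)
    fix Z :: real
    obtain m :: nat where "Z \<le> real m" using real_arch_simple by blast
    with \<open>\<And>m. \<forall>\<^sub>F n in sequentially. real m \<le> real (card (In n))\<close>[of m]
    show "\<forall>\<^sub>F n in sequentially. Z \<le> real (card (In n))"
      by (auto elim: eventually_mono)
  qed
qed



lemma interval_bound: "I \<in> fin_intervals \<Longrightarrow> \<exists>D::nat. I \<subseteq> {- int D..int D}"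
proof -
  assume "I \<in> fin_intervals"
  then obtain p q where I: "I = {p..q}" unfolding fin_intervals_def by auto
  show ?thesis by (rule exI[of _ "nat (max \<bar>p\<bar> \<bar>q\<bar>)"]) (auto simp: I)
qed

theorem lemmaA3:
  fixes sm :: "complex \<Rightarrow> 'a::{banach,real_normed_algebra_1} \<Rightarrow> 'a"
    and st :: "'a \<Rightarrow> 'a"
    and M :: "int set \<Rightarrow> 'a set"
    and \<gamma> :: "int \<Rightarrow> 'a \<Rightarrow> 'a"
    and \<omega> :: "'a \<Rightarrow> complex"
    and In :: "nat \<Rightarrow> int set"
    and x y :: 'a
  assumes "quasi_local sm st M"
    and "shift_action sm st M \<gamma>"
    and "invariant_multiplicative_state sm st M \<gamma> \<omega>"
    and "\<forall>n. In n \<in> fin_intervals"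
    and "incseq In"
    and "(\<Union>n. In n) = UNIV"
    and "x \<in> local_sa st M" and "y \<in> local_sa st M"
  shows "(\<lambda>n. norm (Lfun sm (fluct sm \<gamma> \<omega> (In n) x) (fluct sm \<gamma> \<omega> (In n) y))) \<longlonglongrightarrow> 0"
proof -
  have cs: "cstar_algebra sm st" using assms(1) unfolding quasi_local_def by blast
  interpret C: cstar sm st by unfold_locales (rule cs)
  have Mmono: "\<And>I J. I \<in> fin_intervals \<Longrightarrow> J \<in> fin_intervals \<Longrightarrow> I \<subseteq> J \<Longrightarrow> M I \<subseteq> M J"
    using assms(1) unfolding quasi_local_def by blast
  have Mcomm: "\<And>I J u v. I \<in> fin_intervals \<Longrightarrow> J \<in> fin_intervals \<Longrightarrow> I \<inter> J = {} \<Longrightarrow> u \<in> M I \<Longrightarrow> v \<in> M J \<Longrightarrow> u * v = v * u"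
    using assms(1) unfolding quasi_local_def by blast
  have aut: "\<And>j. star_automorphism sm st (\<gamma> j)"
    using assms(2) unfolding shift_action_def by blast
  have shiftM: "\<And>j I. I \<in> fin_intervals \<Longrightarrow> \<gamma> j ` M I = M ((\<lambda>k. k + j) ` I)"
    using assms(2) unfolding shift_action_def by blast
  have stat: "is_state sm st \<omega>"
    using assms(3) unfolding invariant_multiplicative_state_def by blast
  obtain Ix where Ix: "Ix \<in> fin_intervals" "x \<in> M Ix" and stx: "st x = x"
    using assms(7) unfolding local_sa_def by blast
  obtain Iy where Iy: "Iy \<in> fin_intervals" "y \<in> M Iy" and sty: "st y = y"
    using assms(8) unfolding local_sa_def by blast
  obtain D1 D2 :: nat where D1: "Ix \<subseteq> {- int D1..int D1}" and D2: "Iy \<subseteq> {- int D2..int D2}"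
    using interval_bound[OF Ix(1)] interval_bound[OF Iy(1)] by blast
  define D0 where "D0 = max D1 D2"
  have xM: "x \<in> M {- int D0..int D0}"
    using Mmono[OF Ix(1) interval_fin, of "- int D0" "int D0"] D1 Ix(2) unfolding D0_def by force
  have yM: "y \<in> M {- int D0..int D0}"
    using Mmono[OF Iy(1) interval_fin, of "- int D0" "int D0"] D2 Iy(2) unfolding D0_def by force
  have loc: "\<gamma> j z \<in> M {j - int D0..j + int D0}" if "z \<in> M {- int D0..int D0}" for j z
  proof -
    have "\<gamma> j z \<in> \<gamma> j ` M {- int D0..int D0}" using that by blast
    also have "\<dots> = M {- int D0 + j..int D0 + j}"
      by (simp add: shiftM[OF interval_fin] shift_interval)
    finally show ?thesis by (simp add: add.commute)
  qed
  have gcomm: "\<gamma> i u * \<gamma> k v = \<gamma> k v * \<gamma> i u"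
    if u: "u \<in> M {- int D0..int D0}" and v: "v \<in> M {- int D0..int D0}" and ik: "int (2 * D0) < \<bar>i - k\<bar>" for i k u v
  proof (rule Mcomm[OF interval_fin interval_fin _ loc[OF u] loc[OF v]])
    show "{i - int D0..i + int D0} \<inter> {k - int D0..k + int D0} = {}" using ik by auto
  qed auto
  define X where "X i = \<gamma> i x - sm (\<omega> x) 1" for i
  define Y where "Y i = \<gamma> i y - sm (\<omega> y) 1" for i
  define D where "D = 2 * D0"
  have cXX: "X i * X k = X k * X i" if "int D < \<bar>i - k\<bar>" for i k
    unfolding X_def by (rule C.shifted_comm[OF gcomm[OF xM xM]]) (use that D_def in auto)
  have cXY: "X i * Y k = Y k * X i" if "int D < \<bar>i - k\<bar>" for i k
    unfolding X_def Y_def by (rule C.shifted_comm[OF gcomm[OF xM yM]]) (use that D_def in auto)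
  have cYX: "Y i * X k = X k * Y i" if "int D < \<bar>i - k\<bar>" for i k
    using cXY[of k i] that by (simp add: abs_minus_commute)
  have cYY: "Y i * Y k = Y k * Y i" if "int D < \<bar>i - k\<bar>" for i k
    unfolding Y_def by (rule C.shifted_comm[OF gcomm[OF yM yM]]) (use that D_def in auto)
  define Kx where "Kx = norm x + cmod (\<omega> x)"
  define Ky where "Ky = norm y + cmod (\<omega> y)"
  have bX: "norm (X i) \<le> Kx" for i
  proof -
    have "norm (X i) \<le> norm (\<gamma> i x) + norm (sm (\<omega> x) 1)" unfolding X_def by (rule norm_triangle_ineq4)
    also have "\<dots> \<le> norm x + cmod (\<omega> x)" using C.aut_norm[OF aut] by (simp add: C.norm_sm)
    finally show ?thesis by (simp add: Kx_def)
  qed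
  have bY: "norm (Y i) \<le> Ky" for i
  proof -
    have "norm (Y i) \<le> norm (\<gamma> i y) + norm (sm (\<omega> y) 1)" unfolding Y_def by (rule norm_triangle_ineq4)
    also have "\<dots> \<le> norm y + cmod (\<omega> y)" using C.aut_norm[OF aut] by (simp add: C.norm_sm)
    finally show ?thesis by (simp add: Ky_def)
  qed
  have stX: "st (X i) = X i" for i
  proof -
    have "st (\<gamma> i x) = \<gamma> i x" by (metis C.aut_props(4)[OF aut] stx)
    then show ?thesis unfolding X_def using C.state_real[OF stat stx]
      by (simp add: C.st_diff C.st_sm)
  qed
  have stY: "st (Y i) = Y i" for i
  proof -
    have "st (\<gamma> i y) = \<gamma> i y" by (metis C.aut_props(4)[OF aut] sty)
    then show ?thesis unfolding Y_def using C.state_real[OF stat sty]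
      by (simp add: C.st_diff C.st_sm)
  qed
  define K where "K = (real (4 * D + 1))\<^sup>2 * (4 * Kx * Kx * Ky + 4 * Ky * Kx * Ky)"
  have bound: "norm (Lfun sm (fluct sm \<gamma> \<omega> I x) (fluct sm \<gamma> \<omega> I y)) \<le> K * inverse (sqrt (real (card I)))"
    if I: "I \<in> fin_intervals" for I
  proof -
    have finI: "finite I" by (rule fin_intervals_finite[OF I])
    have Ipos: "card I > 0" using I unfolding fin_intervals_def by auto
    define s where "s = 1 / sqrt (real (card I))"
    have a: "fluct sm \<gamma> \<omega> I x = s *\<^sub>R sum X I" unfolding fluct_def s_def X_def ..
    have b: "fluct sm \<gamma> \<omega> I y = s *\<^sub>R sum Y I" unfolding fluct_def s_def Y_def ..
    have sta: "st (s *\<^sub>R sum X I) = s *\<^sub>R sum X I" by (simp add: C.st_scaleR C.st_sum stX)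
    have stb: "st (s *\<^sub>R sum Y I) = s *\<^sub>R sum Y I" by (simp add: C.st_scaleR C.st_sum stY)
    have "norm (Lfun sm (fluct sm \<gamma> \<omega> I x) (fluct sm \<gamma> \<omega> I y))
       \<le> norm (cm (s *\<^sub>R sum X I) (cm (s *\<^sub>R sum X I) (s *\<^sub>R sum Y I)))
        + norm (cm (s *\<^sub>R sum Y I) (cm (s *\<^sub>R sum X I) (s *\<^sub>R sum Y I)))"
      unfolding a b cm_def by (rule C.Lfun_bound[OF sta stb])
    also have "cm (s *\<^sub>R sum X I) (cm (s *\<^sub>R sum X I) (s *\<^sub>R sum Y I))
        = (s * s * s) *\<^sub>R (\<Sum>i\<in>I. \<Sum>j\<in>I. \<Sum>k\<in>I. cm (X i) (cm (X j) (Y k)))"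
      by (simp only: cm_scale_left cm_scale_right cm_sum_left, simp only: cm_sum_right, simp)
    also have "cm (s *\<^sub>R sum Y I) (cm (s *\<^sub>R sum X I) (s *\<^sub>R sum Y I))
        = (s * s * s) *\<^sub>R (\<Sum>i\<in>I. \<Sum>j\<in>I. \<Sum>k\<in>I. cm (Y i) (cm (X j) (Y k)))"
      by (simp only: cm_scale_left cm_scale_right cm_sum_left, simp only: cm_sum_right, simp)
    also have "norm ((s * s * s) *\<^sub>R (\<Sum>i\<in>I. \<Sum>j\<in>I. \<Sum>k\<in>I. cm (X i) (cm (X j) (Y k))))
             + norm ((s * s * s) *\<^sub>R (\<Sum>i\<in>I. \<Sum>j\<in>I. \<Sum>k\<in>I. cm (Y i) (cm (X j) (Y k))))
        \<le> (s * s * s) * (real (card I) * (real (4 * D + 1))\<^sup>2 * (4 * Kx * Kx * Ky))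
         + (s * s * s) * (real (card I) * (real (4 * D + 1))\<^sup>2 * (4 * Ky * Kx * Ky))"
    proof -
      have s0: "s \<ge> 0" by (simp add: s_def)
      have t1: "norm (\<Sum>i\<in>I. \<Sum>j\<in>I. \<Sum>k\<in>I. cm (X i) (cm (X j) (Y k)))
          \<le> real (card I) * (real (4 * D + 1))\<^sup>2 * (4 * Kx * Kx * Ky)"
        by (rule triple_bound[OF finI cXX cXY cXY bX bX bY])
      have t2: "norm (\<Sum>i\<in>I. \<Sum>j\<in>I. \<Sum>k\<in>I. cm (Y i) (cm (X j) (Y k)))
          \<le> real (card I) * (real (4 * D + 1))\<^sup>2 * (4 * Ky * Kx * Ky)"
        by (rule triple_bound[OF finI cYX cYY cXY bY bX bY])
      show ?thesis using t1 t2 s0 by (auto intro!: add_mono mult_left_mono)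
    qed
    also have "\<dots> = (s * s * s * real (card I)) * K"
      by (simp add: K_def algebra_simps)
    also have "s * s * s * real (card I) = inverse (sqrt (real (card I)))"
    proof -
      have sq: "sqrt (real (card I)) * sqrt (real (card I)) = real (card I)" by simp
      have "sqrt (real (card I)) > 0" using Ipos by simp
      then show ?thesis unfolding s_def using sq
        by (simp add: field_simps)
    qed
    finally show ?thesis by (simp add: mult.commute)
  qed
  have lim: "(\<lambda>n. K * inverse (sqrt (real (card (In n))))) \<longlonglongrightarrow> 0"
  proof -
    have "filterlim (\<lambda>n. sqrt (real (card (In n)))) at_top sequentially"
      by (rule filterlim_compose[OF sqrt_at_top card_tendsto[OF assms(4-6)]])
    then have "(\<lambda>n. inverse (sqrt (real (card (In n))))) \<longlonglongrightarrow> 0"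
      by (rule tendsto_inverse_0_at_top)
    from tendsto_mult[OF tendsto_const[of K] this] show ?thesis by simp
  qed
  show ?thesis
    by (rule Lim_null_comparison[OF _ lim]) (use bound assms(4) in auto)
qed

end
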